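(* Let $q>1$ and $0<u<1$. Put weights on the edges $\lambda\to\Lambda$ of Young's lattice ($\Lambda$ obtained from $\lambda$ by adding one box): $m_{\lambda,\Lambda}=\frac{u}{q^{\lambda'_1}(q^{\lambda'_1+1}-1)}$ if the box is added to column $1$, and $m_{\lambda,\Lambda}=\frac{u\,(q^{-\lambda'_s}-q^{-\lambda'_{s-1}})}{q^{\lambda'_1}-1}$ if it is added to column $s>1$. Then for every standard Young tableau $T$, the probability that the Young Tableau Algorithm (run to termination) outputs $T$ equals $$\prod_{r=1}^\infty(1-u/q^r)\prod_{i=0}^{|T|-1}m_{\gamma_i,\gamma_{i+1}},$$ where $\emptyset=\gamma_0\subset\gamma_1\subset\dots\subset\gamma_{|T|}$ is the chain of shapes with $\gamma_k$ the shape formed by the entries $1,\dots,k$ of $T$.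
   Context: $\lambda'_s$ is the length of column $s$ of $\lambda$ ($0$ if empty). Young Tableau Algorithm: coins indexed by $N\ge1$, coin $N$ showing heads with probability $u/q^N$, all flips independent. Start with $\lambda=\emptyset$, $N=1$. Flip coin $N$. If tails, set $N\to N+1$ and flip the new coin. If heads, choose a column $S\ge1$ with $\Pr(S=1)=\frac{q^{N-\lambda'_1}-1}{q^N-1}$ and $\Pr(S=s)=\frac{q^{N-\lambda'_s}-q^{N-\lambda'_{s-1}}}{q^N-1}$ for $s>1$, add a box at the bottom of column $S$, and flip coin $N$ again. Almost surely only finitely many boxes are added; the output is the standard Young tableau obtained by labelling boxes $1,2,\dots$ in order of creation. *)

theory Defs
  imports "HOL-Probability.Probability"
begin

text \<open>Tableaux/diagrams: a function nat \<times> nat \<Rightarrow> nat on boxes (row, column),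
  rows and columns indexed from 1; value 0 means "no box", otherwise the label.\<close>

type_synonym tab = "nat \<times> nat \<Rightarrow> nat"

definition syt :: "tab \<Rightarrow> nat \<Rightarrow> bool" where
  "syt T n \<longleftrightarrow>
     (\<forall>i j. T (i, j) \<noteq> 0 \<longrightarrow> 1 \<le> i \<and> 1 \<le> j) \<and>
     bij_betw T {b. T b \<noteq> 0} {1..n} \<and>
     (\<forall>i j. T (i, j) \<noteq> 0 \<and> 1 < i \<longrightarrow> T (i - 1, j) \<noteq> 0 \<and> T (i - 1, j) < T (i, j)) \<and>
     (\<forall>i j. T (i, j) \<noteq> 0 \<and> 1 < j \<longrightarrow> T (i, j - 1) \<noteq> 0 \<and> T (i, j - 1) < T (i, j))"

definition clen :: "tab \<Rightarrow> nat \<Rightarrow> nat" where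
  "clen Tab s = card {i. Tab (i, s) \<noteq> 0}"

definition dlen :: "(nat \<times> nat) set \<Rightarrow> nat \<Rightarrow> nat" where
  "dlen A s = card {i. (i, s) \<in> A}"

definition shape :: "tab \<Rightarrow> nat \<Rightarrow> (nat \<times> nat) set" where
  "shape T k = {b. T b \<noteq> 0 \<and> T b \<le> k}"

definition edge_wt :: "real \<Rightarrow> real \<Rightarrow> (nat \<times> nat) set \<Rightarrow> (nat \<times> nat) set \<Rightarrow> real" where
  "edge_wt q u lam Lam =
     (let s = (THE s. 1 \<le> s \<and> dlen Lam s \<noteq> dlen lam s) in
      if s = 1 then u / (q ^ dlen lam 1 * (q ^ (dlen lam 1 + 1) - 1))
      else u * (1 / q ^ dlen lam s - 1 / q ^ dlen lam (s - 1)) / (q ^ dlen lam 1 - 1))"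

text \<open>Column choice probability Pr(S = s) when the current coin is N.\<close>
definition colprob :: "real \<Rightarrow> nat \<Rightarrow> tab \<Rightarrow> nat \<Rightarrow> real" where
  "colprob q N Tab s =
     (if s = 1 then (q ^ N / q ^ clen Tab 1 - 1) / (q ^ N - 1)
      else (q ^ N / q ^ clen Tab s - q ^ N / q ^ clen Tab (s - 1)) / (q ^ N - 1))"

text \<open>State: (current coin N, tableau built so far, number of boxes).
  One step consumes a fresh pair (x, y) of independent uniform [0,1] variables:
  coin N shows heads iff x < u / q^N; on heads, the column S is the s with
  y in the s-th interval of the partition of [0,1] with lengths colprob.\<close>
type_synonym ystate = "nat \<times> tab \<times> nat"

definition ystep :: "real \<Rightarrow> real \<Rightarrow> real \<times> real \<Rightarrow> ystate \<Rightarrow> ystate" where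
  "ystep q u xy st =
     (case st of (N, Tab, c) \<Rightarrow>
       if fst xy < u / q ^ N then
         (let s = (LEAST s. 1 \<le> s \<and> snd xy < (\<Sum>t = 1..s. colprob q N Tab t)) in
          (N, Tab((clen Tab s + 1, s) := c + 1), c + 1))
       else (Suc N, Tab, c))"

primrec yrun :: "real \<Rightarrow> real \<Rightarrow> (nat \<Rightarrow> real \<times> real) \<Rightarrow> nat \<Rightarrow> ystate" where
  "yrun q u \<omega> 0 = (1, (\<lambda>_. 0), 0)"
| "yrun q u \<omega> (Suc k) = ystep q u (\<omega> k) (yrun q u \<omega> k)"

definition coin_space :: "(nat \<Rightarrow> real \<times> real) measure" where
  "coin_space = (\<Pi>\<^sub>M i\<in>(UNIV::nat set).
      uniform_measure lborel {0..1::real} \<Otimes>\<^sub>M uniform_measure lborel {0..1::real})"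

definition outputs :: "real \<Rightarrow> real \<Rightarrow> tab \<Rightarrow> (nat \<Rightarrow> real \<times> real) set" where
  "outputs q u T = {\<omega> \<in> space coin_space. \<exists>K. \<forall>k\<ge>K. fst (snd (yrun q u \<omega> k)) = T}"

end

theory Submission
  imports Defs
begin


definition mu :: "(real \<times> real) measure" where
  "mu = uniform_measure lborel {0..1::real} \<Otimes>\<^sub>M uniform_measure lborel {0..1::real}"

lemma prob_space_mu: "prob_space mu"
  unfolding mu_def by (intro prob_space_pair prob_space_uniform_measure) auto

lemma space_mu[simp]: "space mu = UNIV"
  unfolding mu_def by (simp add: space_pair_measure)

lemma coin_space_eq: "coin_space = PiM UNIV (\<lambda>_. mu)"
  unfolding coin_space_def mu_def ..

interpretation CS: product_prob_space "\<lambda>_::nat. mu" UNIV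
  using prob_space_mu
  by (simp add: product_prob_space_def product_sigma_finite_def product_prob_space_axioms_def prob_space_imp_sigma_finite)

lemma space_coin[simp]: "space coin_space = UNIV"
  unfolding coin_space_eq by (auto simp: space_PiM)

lemma prob_coin: "prob_space coin_space"
  unfolding coin_space_eq by (rule CS.P.prob_space_axioms)

definition extk :: "nat \<Rightarrow> (nat \<Rightarrow> real \<times> real) \<Rightarrow> nat \<Rightarrow> real \<times> real" where
  "extk k x = (\<lambda>j. if j < k then x j else undefined)"

lemma extk_meas: "k \<le> m \<Longrightarrow> extk k \<in> measurable (PiM {..<m} (\<lambda>_. mu)) coin_space"
  unfolding coin_space_eq extk_def
proof (intro measurable_PiM_single')
  fix j assume "k \<le> m"
  then show "(\<lambda>\<omega>. if j < k then \<omega> j else undefined) \<in> Pi\<^sub>M {..<m} (\<lambda>_. mu) \<rightarrow>\<^sub>M mu"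
    by (cases "j < k") (auto intro!: measurable_component_singleton)
qed (auto simp: space_PiM)

lemma indep_step:
  assumes A: "A \<in> sets coin_space"
    and loc: "\<And>\<omega> \<omega>'. (\<forall>j<k. \<omega> j = \<omega>' j) \<Longrightarrow> \<omega> \<in> A \<longleftrightarrow> \<omega>' \<in> A"
    and B: "B \<in> sets mu"
  shows "measure coin_space (A \<inter> {\<omega>. \<omega> k \<in> B}) = measure coin_space A * measure mu B"
proof -
  let ?M = "\<lambda>_::nat. mu"
  define A1 where "A1 = {x \<in> space (PiM {..<k} ?M). extk k x \<in> A}"
  define A2 where "A2 = {x \<in> space (PiM {..<Suc k} ?M). extk k x \<in> A \<and> x k \<in> B}"
  have A1m: "A1 \<in> sets (PiM {..<k} ?M)"
  proof -
    have "A1 = extk k -` A \<inter> space (PiM {..<k} ?M)" unfolding A1_def by auto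
    then show ?thesis using measurable_sets[OF extk_meas[of k k] A] by simp
  qed
  have A2m: "A2 \<in> sets (PiM {..<Suc k} ?M)"
  proof -
    have "A2 = (extk k -` A \<inter> space (PiM {..<Suc k} ?M)) \<inter> ((\<lambda>x. x k) -` B \<inter> space (PiM {..<Suc k} ?M))"
      unfolding A2_def by auto
    moreover have "(\<lambda>x. x k) \<in> measurable (PiM {..<Suc k} ?M) mu"
      by (rule measurable_component_singleton) auto
    ultimately show ?thesis using measurable_sets[OF extk_meas[of k "Suc k"] A] measurable_sets[OF _ B]
      by (metis (no_types, lifting) le_SucI order_refl sets.Int)
  qed
  have locA: "extk k x \<in> A \<longleftrightarrow> x \<in> A" for x
    using loc[of "extk k x" x] by (auto simp: extk_def)
  have e1: "prod_emb UNIV ?M {..<k} A1 = A"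
    using locA unfolding prod_emb_def A1_def
    by (auto simp: space_PiM extk_def intro: loc[THEN iffD1, rotated] loc[THEN iffD2, rotated])
  have e2: "prod_emb UNIV ?M {..<Suc k} A2 = A \<inter> {\<omega>. \<omega> k \<in> B}"
    using locA unfolding prod_emb_def A2_def
    by (auto simp: space_PiM extk_def intro: loc[THEN iffD1, rotated] loc[THEN iffD2, rotated])
  have "emeasure coin_space (A \<inter> {\<omega>. \<omega> k \<in> B}) = emeasure (PiM {..<Suc k} ?M) A2"
    unfolding coin_space_eq e2[symmetric] by (rule CS.emeasure_PiM_emb') (auto simp: A2m)
  also have "\<dots> = (\<integral>\<^sup>+ x. indicator A2 x \<partial>PiM {..<Suc k} ?M)"
    using A2m by simp
  also have "\<dots> = (\<integral>\<^sup>+ x. (\<integral>\<^sup>+ y. indicator A2 (x(k := y)) \<partial>mu) \<partial>PiM {..<k} ?M)"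
    unfolding lessThan_Suc by (rule CS.product_nn_integral_insert) (use A2m in \<open>auto simp: lessThan_Suc\<close>)
  also have "\<dots> = (\<integral>\<^sup>+ x. emeasure mu B * indicator A1 x \<partial>PiM {..<k} ?M)"
  proof (rule nn_integral_cong)
    fix x assume x: "x \<in> space (PiM {..<k} ?M)"
    have "indicator A2 (x(k := y)) = (indicator A1 x * indicator B y :: ennreal)" for y
    proof -
      have sp: "x(k := y) \<in> space (PiM {..<Suc k} ?M)" using x by (auto simp: space_PiM PiE_def extensional_def)
      have "extk k (x(k := y)) = extk k x" by (auto simp: extk_def)
      then show ?thesis using x sp unfolding A1_def A2_def by (auto simp: indicator_def)
    qed
    then show "(\<integral>\<^sup>+ y. indicator A2 (x(k := y)) \<partial>mu) = emeasure mu B * indicator A1 x"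
      using B by (simp add: nn_integral_cmult_indicator mult.commute)
  qed
  also have "\<dots> = emeasure mu B * emeasure (PiM {..<k} ?M) A1"
    using A1m by (simp add: nn_integral_cmult_indicator)
  also have "emeasure (PiM {..<k} ?M) A1 = emeasure coin_space A"
    unfolding coin_space_eq e1[symmetric] by (rule CS.emeasure_PiM_emb'[symmetric]) (auto simp: A1m)
  finally have "emeasure coin_space (A \<inter> {\<omega>. \<omega> k \<in> B}) = emeasure mu B * emeasure coin_space A" .
  then show ?thesis
    by (simp add: measure_def enn2real_mult mult.commute)
qed

lemma ystep_meas: "(\<lambda>xy. ystep q u xy st) \<in> mu \<rightarrow>\<^sub>M count_space UNIV"
proof -
  obtain N Tab c where st: "st = (N, Tab, c)" by (cases st) auto
  show ?thesis unfolding st ystep_def mu_def by simp measurable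
qed

primrec RS :: "real \<Rightarrow> real \<Rightarrow> nat \<Rightarrow> ystate set" where
  "RS q u 0 = {(1, (\<lambda>_. 0), 0)}"
| "RS q u (Suc k) = (\<Union>st\<in>RS q u k. range (\<lambda>xy. ystep q u xy st))"

lemma countable_ystep_range: "countable (range (\<lambda>xy. ystep q u xy st))"
proof -
  obtain N Tab c where st: "st = (N, Tab, c)" by (cases st) auto
  have "range (\<lambda>xy. ystep q u xy st) \<subseteq> insert (Suc N, Tab, c) (range (\<lambda>s. (N, Tab((clen Tab s + 1, s) := c + 1), c + 1)))"
    unfolding st ystep_def by (auto simp: Let_def)
  then show ?thesis by (rule countable_subset) auto
qed

lemma countable_RS: "countable (RS q u k)"
  by (induction k) (auto intro: countable_ystep_range)

lemma yrun_RS: "yrun q u \<omega> k \<in> RS q u k"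
  by (induction k) auto

lemma yrun_loc: "(\<And>j. j < k \<Longrightarrow> \<omega> j = \<omega>' j) \<Longrightarrow> yrun q u \<omega> k = yrun q u \<omega>' k"
  by (induction k) auto

lemma yrun_meas: "(\<lambda>\<omega>. yrun q u \<omega> k) \<in> coin_space \<rightarrow>\<^sub>M count_space UNIV"
proof (induction k)
  case 0
  then show ?case by simp
next
  case (Suc k)
  have g: "(\<lambda>\<omega>. yrun q u \<omega> k) \<in> coin_space \<rightarrow>\<^sub>M count_space (RS q u k)"
    unfolding measurable_count_space_eq_countable[OF countable_RS]
  proof (intro conjI ballI)
    show "(\<lambda>\<omega>. yrun q u \<omega> k) \<in> space coin_space \<rightarrow> RS q u k" using yrun_RS by auto
    fix a show "(\<lambda>\<omega>. yrun q u \<omega> k) -` {a} \<inter> space coin_space \<in> sets coin_space"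
      using measurable_sets[OF Suc, of "{a}"] by simp
  qed
  have f: "(\<lambda>\<omega>. ystep q u (\<omega> k) st) \<in> coin_space \<rightarrow>\<^sub>M count_space UNIV" for st
    using measurable_compose[OF _ ystep_meas, of "\<lambda>\<omega>. \<omega> k" coin_space q u st]
    unfolding coin_space_eq by (auto intro: measurable_component_singleton)
  show ?case
    using measurable_compose_countable'[OF f g countable_RS] by simp
qed

lemma yrun_event: "{\<omega>. yrun q u \<omega> k = st} \<in> sets coin_space"
  using measurable_sets[OF yrun_meas, of "{st}" q u k] by (simp add: vimage_def)




lemma H_key:
  fixes q :: real and M a :: nat
  assumes "q > 1" "1 \<le> M"
  shows "(\<Prod>i<a. 1 - q ^ i / q ^ M) * (1 - q ^ a / q ^ M) = (1 - 1 / q ^ M) * (\<Prod>i<a. 1 - q ^ i / q ^ (M - 1))"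
proof -
  have e: "q ^ Suc i / q ^ M = q ^ i / q ^ (M - 1)" for i
  proof -
    have "M = Suc (M - 1)" using assms(2) by simp
    then have "q ^ M = q * q ^ (M - 1)" by (metis power_Suc)
    then show ?thesis using assms(1) by (simp add: field_simps)
  qed
  have "(\<Prod>i<a. 1 - q ^ i / q ^ M) * (1 - q ^ a / q ^ M) = (\<Prod>i<Suc a. 1 - q ^ i / q ^ M)"
    by simp
  also have "\<dots> = (1 - 1 / q ^ M) * (\<Prod>i<a. 1 - q ^ Suc i / q ^ M)"
    by (subst prod.lessThan_Suc_shift) simp
  finally show ?thesis by (simp only: e)
qed

lemma alg_col1:
  fixes q u A B y z :: real
  assumes q: "q > 1" and y: "y > 1" and z: "z \<ge> 1" and key: "A * (1 - z / y) = (1 - 1 / y) * B"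
  shows "u / (z * (q * z - 1)) * (A * (1 - z / y) - B * (1 - q * z / y)) = A * (u / y * ((y / z - 1) / (y - 1)))"
proof -
  have y1: "y - 1 > 0" using y by simp
  have y0: "y > 0" using y by simp
  have z0: "z > 0" using z by simp
  have qz0: "q * (z - 1) \<ge> 0" using q z by simp
  have "q * z = q * (z - 1) + q" by (simp add: algebra_simps)
  then have qz: "q * z - 1 > 0" using qz0 q by linarith
  have k2: "A * (y - z) = (y - 1) * B"
  proof -
    have "A * (y - z) = y * (A * (1 - z / y))" using y0 by (simp add: field_simps)
    also have "\<dots> = y * ((1 - 1 / y) * B)" using key by simp
    also have "\<dots> = (y - 1) * B" using y0 by (simp add: field_simps)
    finally show ?thesis .
  qed
  have B: "B = A * (y - z) / (y - 1)"
    using k2 y1 by (simp add: field_simps)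
  have d1: "A * (1 - z / y) = A * (y - z) / y" using y0 by (simp add: field_simps)
  have d2: "B * (1 - q * z / y) = A * (y - z) * (y - q * z) / ((y - 1) * y)"
    unfolding B using y0 y1 by (simp add: field_simps)
  have d: "A * (1 - z / y) - B * (1 - q * z / y) = A * (y - z) * (q * z - 1) / (y * (y - 1))"
  proof -
    have "A * (1 - z / y) - B * (1 - q * z / y) = A * (y - z) / y - A * (y - z) * (y - q * z) / ((y - 1) * y)"
      using d1 d2 by simp
    also have "\<dots> = A * (y - z) * ((y - 1) - (y - q * z)) / (y * (y - 1))"
      using y0 y1 by (simp add: field_simps)
    also have "(y - 1) - (y - q * z) = q * z - 1" by simp
    finally show ?thesis .
  qed
  have r: "(y / z - 1) / (y - 1) = (y - z) / (z * (y - 1))"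
    using y1 z0 by (simp add: field_simps)
  have canc: "w \<noteq> 0 \<Longrightarrow> a / (zz * w) * (X * w / m) = a * X / (zz * m)" for a zz w X m :: real
    by (simp add: field_simps)
  have "u / (z * (q * z - 1)) * (A * (y - z) * (q * z - 1) / (y * (y - 1))) = u * (A * (y - z)) / (z * (y * (y - 1)))"
    using canc[of "q * z - 1" u z "A * (y - z)" "y * (y - 1)"] qz by simp
  also have "\<dots> = u * A * (y - z) / (z * y * (y - 1))" by (simp add: mult.assoc)
  finally have "u / (z * (q * z - 1)) * (A * (y - z) * (q * z - 1) / (y * (y - 1))) = u * A * (y - z) / (z * y * (y - 1))" .
  moreover have "A * (u / y * ((y - z) / (z * (y - 1)))) = u * A * (y - z) / (z * y * (y - 1))"
    by (simp add: field_simps)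
  ultimately show ?thesis unfolding d r by simp
qed

lemma alg_col2:
  fixes u A B y z D :: real
  assumes y: "y > 1" and z: "z > 1" and key: "A * (1 - z / y) = (1 - 1 / y) * B"
  shows "u * D / (z - 1) * (A - B) = A * (u / y * (y * D / (y - 1)))"
proof -
  have y1: "y - 1 > 0" using y by simp
  have y0: "y > 0" using y by simp
  have z1: "z - 1 > 0" using z by simp
  have k2: "A * (y - z) = (y - 1) * B"
  proof -
    have "A * (y - z) = y * (A * (1 - z / y))" using y0 by (simp add: field_simps)
    also have "\<dots> = y * ((1 - 1 / y) * B)" using key by simp
    also have "\<dots> = (y - 1) * B" using y0 by (simp add: field_simps)
    finally show ?thesis .
  qed
  have B: "B = A * (y - z) / (y - 1)"
    using k2 y1 by (simp add: field_simps)
  have d: "A - B = A * (z - 1) / (y - 1)"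
    unfolding B using y1 by (simp add: field_simps)
  have "u * D / (z - 1) * (A * (z - 1) / (y - 1)) = u * D * A / (y - 1)"
    using z1 by simp
  moreover have "A * (u / y * (y * D / (y - 1))) = u * D * A / (y - 1)"
    using y0 by simp
  ultimately show ?thesis unfolding d using y0 z1 y1 by simp
qed

locale ysetup =
  fixes q u :: real and T :: tab and n :: nat
  assumes q1: "q > 1" and u0: "0 < u" and u1: "u < 1" and syt: "syt T n"
begin

lemma T_pos: "T (i, j) \<noteq> 0 \<Longrightarrow> 1 \<le> i \<and> 1 \<le> j"
  using syt unfolding syt_def by blast

lemma T_bij: "bij_betw T {b. T b \<noteq> 0} {1..n}"
  using syt unfolding syt_def by blast

lemma T_le: "T b \<le> n"
  using T_bij by (cases "T b = 0") (auto simp: bij_betw_def)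

lemma T_inj: "T b = T b' \<Longrightarrow> T b \<noteq> 0 \<Longrightarrow> b = b'"
  using T_bij by (metis (mono_tags) bij_betw_def inj_onD mem_Collect_eq)

lemma T_surj: "1 \<le> c \<Longrightarrow> c \<le> n \<Longrightarrow> \<exists>b. T b = c"
proof -
  assume "1 \<le> c" "c \<le> n"
  then have "c \<in> T ` {b. T b \<noteq> 0}" using T_bij by (simp add: bij_betw_def)
  then show ?thesis by blast
qed

lemma T_fin: "finite {b. T b \<noteq> 0}"
  using bij_betw_finite[OF T_bij] by simp

lemma col_step: "T (i, j) \<noteq> 0 \<Longrightarrow> 1 < i \<Longrightarrow> T (i - 1, j) \<noteq> 0 \<and> T (i - 1, j) < T (i, j)"
  using syt unfolding syt_def by blast

lemma row_step: "T (i, j) \<noteq> 0 \<Longrightarrow> 1 < j \<Longrightarrow> T (i, j - 1) \<noteq> 0 \<and> T (i, j - 1) < T (i, j)"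
  using syt unfolding syt_def by blast

lemma col_strict: "T (i, j) \<noteq> 0 \<Longrightarrow> 1 \<le> i' \<Longrightarrow> i' < i \<Longrightarrow> T (i', j) \<noteq> 0 \<and> T (i', j) < T (i, j)"
proof (induction i arbitrary: i')
  case 0 then show ?case by simp
next
  case (Suc i)
  have s: "T (i, j) \<noteq> 0 \<and> T (i, j) < T (Suc i, j)" using col_step[of "Suc i" j] Suc.prems by auto
  show ?case
  proof (cases "i' = i")
    case True then show ?thesis using s by simp
  next
    case False then show ?thesis using Suc.IH[of i'] s Suc.prems by auto
  qed
qed

lemma row_strict: "T (i, j) \<noteq> 0 \<Longrightarrow> 1 \<le> j' \<Longrightarrow> j' < j \<Longrightarrow> T (i, j') \<noteq> 0 \<and> T (i, j') < T (i, j)"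
proof (induction j arbitrary: j')
  case 0 then show ?case by simp
next
  case (Suc j)
  have s: "T (i, j) \<noteq> 0 \<and> T (i, j) < T (i, Suc j)" using row_step[of i "Suc j"] Suc.prems by auto
  show ?case
  proof (cases "j' = j")
    case True then show ?thesis using s by simp
  next
    case False then show ?thesis using Suc.IH[of j'] s Suc.prems by auto
  qed
qed

definition pos :: "nat \<Rightarrow> nat \<times> nat" where "pos c = (THE b. T b = c)"

lemma T_pos_eq: "1 \<le> c \<Longrightarrow> c \<le> n \<Longrightarrow> T (pos c) = c"
proof -
  assume c: "1 \<le> c" "c \<le> n"
  obtain b where b: "T b = c" using T_surj[OF c] by blast
  have "(THE b. T b = c) = b"
    by (rule the_equality) (use b c T_inj in auto)
  then show ?thesis unfolding pos_def using b by simp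
qed

lemma pos_unique: "T b = c \<Longrightarrow> 1 \<le> c \<Longrightarrow> c \<le> n \<Longrightarrow> b = pos c"
  using T_pos_eq[of c] T_inj[of b "pos c"] by simp

definition Pc :: "nat \<Rightarrow> tab" where "Pc c = (\<lambda>b. if T b \<le> c then T b else 0)"

lemma Pc_0: "Pc 0 = (\<lambda>_. 0)" unfolding Pc_def by auto

lemma Pc_n: "Pc n = T" unfolding Pc_def using T_le by auto

lemma Pc_Suc: "1 \<le> c \<Longrightarrow> c \<le> n \<Longrightarrow> Pc c = (Pc (c - 1))(pos c := c)"
proof (rule ext)
  fix b assume c: "1 \<le> c" "c \<le> n"
  show "Pc c b = ((Pc (c - 1))(pos c := c)) b"
  proof (cases "b = pos c")
    case True then show ?thesis using T_pos_eq[OF c] by (simp add: Pc_def)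
  next
    case False
    then have "T b \<noteq> c" using pos_unique c by blast
    then show ?thesis using False c by (auto simp: Pc_def)
  qed
qed

definition row :: "nat \<Rightarrow> nat" where "row c = fst (pos c)"
definition col :: "nat \<Rightarrow> nat" where "col c = snd (pos c)"

lemma pos_rc: "pos c = (row c, col c)" by (simp add: row_def col_def)

lemma T_rc: "1 \<le> c \<Longrightarrow> c \<le> n \<Longrightarrow> T (row c, col c) = c"
  using T_pos_eq pos_rc by metis

lemma rc_pos: "1 \<le> c \<Longrightarrow> c \<le> n \<Longrightarrow> 1 \<le> row c \<and> 1 \<le> col c"
  using T_rc T_pos by (metis not_one_le_zero)

lemma T_11: "1 \<le> c \<Longrightarrow> c \<le> n \<Longrightarrow> T (1, 1) \<noteq> 0 \<and> T (1, 1) \<le> c"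
proof -
  assume c: "1 \<le> c" "c \<le> n"
  have r: "T (row c, 1) \<noteq> 0 \<and> T (row c, 1) \<le> c"
  proof (cases "col c = 1")
    case True then show ?thesis using T_rc[OF c] c by simp
  next
    case False then show ?thesis using row_strict[of "row c" "col c" 1] T_rc[OF c] rc_pos[OF c] c by auto
  qed
  show ?thesis
  proof (cases "row c = 1")
    case True then show ?thesis using r by simp
  next
    case False then show ?thesis using col_strict[of "row c" 1 1] r rc_pos[OF c] by auto
  qed
qed

definition gam :: "nat \<Rightarrow> (nat \<times> nat) set" where "gam c = shape T c"

lemma dlen_gam: "dlen (gam c) s = clen (Pc c) s"
  unfolding dlen_def clen_def gam_def shape_def Pc_def
  by (rule arg_cong[where f = card]) auto

lemma colset_fin: "finite {i. Tab (i, s) \<noteq> 0}" if "\<And>b. Tab b \<noteq> 0 \<Longrightarrow> T b \<noteq> 0" for Tab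
proof -
  have "{i. Tab (i, s) \<noteq> 0} \<subseteq> fst ` {b. T b \<noteq> 0}" using that by force
  then show ?thesis using T_fin finite_subset by blast
qed

lemma Pc_fin: "finite {i. Pc c (i, s) \<noteq> 0}"
  by (rule colset_fin) (auto simp: Pc_def split: if_splits)

lemma clen_Pc_col: "1 \<le> c \<Longrightarrow> c \<le> n \<Longrightarrow> clen (Pc (c - 1)) (col c) = row c - 1"
proof -
  assume c: "1 \<le> c" "c \<le> n"
  have "{i. Pc (c - 1) (i, col c) \<noteq> 0} = {1..<row c}"
  proof (intro set_eqI iffI)
    fix i assume i: "i \<in> {i. Pc (c - 1) (i, col c) \<noteq> 0}"
    then have t: "T (i, col c) \<noteq> 0" "T (i, col c) \<le> c - 1" by (auto simp: Pc_def split: if_splits)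
    have "1 \<le> i" using T_pos t by blast
    moreover have "i < row c"
    proof (rule ccontr)
      assume "\<not> i < row c"
      then consider "i = row c" | "row c < i" by linarith
      then show False
      proof cases
        case 1 then show False using t T_rc[OF c] c by auto
      next
        case 2 then show False using col_strict[of i "col c" "row c"] t T_rc[OF c] rc_pos[OF c] c by auto
      qed
    qed
    ultimately show "i \<in> {1..<row c}" by simp
  next
    fix i assume "i \<in> {1..<row c}"
    then show "i \<in> {i. Pc (c - 1) (i, col c) \<noteq> 0}"
      using col_strict[of "row c" "col c" i] T_rc[OF c] c by (auto simp: Pc_def)
  qed
  then show ?thesis unfolding clen_def by simp
qed

lemma clen_Pc_step: "1 \<le> c \<Longrightarrow> c \<le> n \<Longrightarrow>
  clen (Pc c) s = clen (Pc (c - 1)) s + (if s = col c then 1 else 0)"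
proof -
  assume c: "1 \<le> c" "c \<le> n"
  have P: "Pc c = (Pc (c - 1))(pos c := c)" by (rule Pc_Suc[OF c])
  have z: "Pc (c - 1) (row c, col c) = 0" using T_rc[OF c] c by (auto simp: Pc_def)
  show ?thesis
  proof (cases "s = col c")
    case True
    have "{i. Pc c (i, s) \<noteq> 0} = insert (row c) {i. Pc (c - 1) (i, s) \<noteq> 0}"
      using True c unfolding P pos_rc by auto
    moreover have "row c \<notin> {i. Pc (c - 1) (i, s) \<noteq> 0}" using z True by simp
    ultimately show ?thesis using True Pc_fin unfolding clen_def by simp
  next
    case False
    have "{i. Pc c (i, s) \<noteq> 0} = {i. Pc (c - 1) (i, s) \<noteq> 0}"
      using False unfolding P pos_rc by auto
    then show ?thesis using False unfolding clen_def by simp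
  qed
qed

lemma clen_Pc_mono: "1 \<le> s \<Longrightarrow> clen (Pc c) (Suc s) \<le> clen (Pc c) s"
proof -
  assume s: "1 \<le> s"
  have "{i. Pc c (i, Suc s) \<noteq> 0} \<subseteq> {i. Pc c (i, s) \<noteq> 0}"
  proof
    fix i assume "i \<in> {i. Pc c (i, Suc s) \<noteq> 0}"
    then have t: "T (i, Suc s) \<noteq> 0" "T (i, Suc s) \<le> c" by (auto simp: Pc_def split: if_splits)
    then show "i \<in> {i. Pc c (i, s) \<noteq> 0}" using row_step[of i "Suc s"] s by (auto simp: Pc_def)
  qed
  then show ?thesis unfolding clen_def using Pc_fin by (rule card_mono[rotated])
qed

lemma clen_Pc_1: "1 \<le> c \<Longrightarrow> c \<le> n \<Longrightarrow> 1 \<le> clen (Pc c) 1"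
proof -
  assume c: "1 \<le> c" "c \<le> n"
  have "1 \<in> {i. Pc c (i, 1) \<noteq> 0}" using T_11[OF c] by (auto simp: Pc_def)
  then have "{i. Pc c (i, 1) \<noteq> 0} \<noteq> {}" by blast
  then show ?thesis unfolding clen_def using Pc_fin by (simp add: Suc_le_eq card_gt_0_iff)
qed

lemma clen_Pc_col1: "1 \<le> c \<Longrightarrow> c \<le> n \<Longrightarrow> 1 < col c \<Longrightarrow> 1 \<le> clen (Pc (c - 1)) 1"
proof -
  assume c: "1 \<le> c" "c \<le> n" and cc: "1 < col c"
  have v: "T (row c, col c - 1) \<noteq> 0 \<and> T (row c, col c - 1) < c" using row_step[of "row c" "col c"] T_rc[OF c] cc c by auto
  then have "2 \<le> c" using c by linarith
  then show ?thesis using clen_Pc_1[of "c - 1"] c by auto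
qed

lemma clen_Pc_large: "\<exists>S. \<forall>s\<ge>S. clen (Pc c) s = 0"
proof -
  define S where "S = Suc (Max (snd ` {b. T b \<noteq> 0}))"
  have "clen (Pc c) s = 0" if "s \<ge> S" for s
  proof -
    have "{i. Pc c (i, s) \<noteq> 0} = {}"
    proof (rule ccontr)
      assume "{i. Pc c (i, s) \<noteq> 0} \<noteq> {}"
      then obtain i where "T (i, s) \<noteq> 0" by (auto simp: Pc_def split: if_splits)
      then have "s \<le> Max (snd ` {b. T b \<noteq> 0})" using T_fin by (intro Max_ge) force+
      then show False using that S_def by simp
    qed
    then show ?thesis unfolding clen_def by simp
  qed
  then show ?thesis by blast
qed

lemma edge_eq: "1 \<le> c \<Longrightarrow> c \<le> n \<Longrightarrow> edge_wt q u (gam (c - 1)) (gam c) =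
   (if col c = 1 then u / (q ^ clen (Pc (c - 1)) 1 * (q ^ (clen (Pc (c - 1)) 1 + 1) - 1))
    else u * (1 / q ^ clen (Pc (c - 1)) (col c) - 1 / q ^ clen (Pc (c - 1)) (col c - 1)) / (q ^ clen (Pc (c - 1)) 1 - 1))"
proof -
  assume c: "1 \<le> c" "c \<le> n"
  have "(THE s. 1 \<le> s \<and> dlen (gam c) s \<noteq> dlen (gam (c - 1)) s) = col c"
    by (rule the_equality) (use clen_Pc_step[OF c] rc_pos[OF c] in \<open>auto simp: dlen_gam split: if_splits\<close>)
  then show ?thesis unfolding edge_wt_def Let_def dlen_gam by simp
qed

definition Pp :: "nat \<Rightarrow> real" where "Pp K = (\<Prod>i<K. 1 - u / q ^ Suc i)"
definition Q :: "nat \<Rightarrow> real" where "Q M = Pp (M - 1)"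
definition W :: "nat \<Rightarrow> real" where "W c = (\<Prod>i<c. edge_wt q u (gam i) (gam (Suc i)))"
definition h :: "nat \<Rightarrow> nat \<Rightarrow> real" where "h c M = (\<Prod>i<clen (Pc c) 1. 1 - q ^ i / q ^ M)"
definition f :: "nat \<Rightarrow> nat \<Rightarrow> real" where "f M c = Q M * W c * h c M"
definition colp :: "nat \<Rightarrow> nat \<Rightarrow> real" where "colp M c = colprob q M (Pc (c - 1)) (col c)"

lemma h_0: "1 \<le> c \<Longrightarrow> c \<le> n \<Longrightarrow> h c 0 = 0"
  unfolding h_def using clen_Pc_1[of c]
  by (subst prod_zero_iff) (auto intro!: bexI[where x = 0])

lemma f_0: "1 \<le> c \<Longrightarrow> c \<le> n \<Longrightarrow> f 0 c = 0"
  unfolding f_def using h_0 by simp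

lemma clen_Pc0: "clen (Pc 0) s = 0"
  unfolding clen_def Pc_0 by simp

lemma f_M0: "f M 0 = Q M"
  unfolding f_def W_def h_def clen_Pc0 by simp

lemma f_10: "f 1 0 = 1"
  unfolding f_M0 Q_def Pp_def by simp

lemma Q_rec: "2 \<le> M \<Longrightarrow> Q M = Q (M - 1) * (1 - u / q ^ (M - 1))"
proof -
  assume "2 \<le> M"
  then have K: "M = Suc (Suc (M - 2))" by simp
  show ?thesis by (subst (1 2 3) K) (simp add: Q_def Pp_def)
qed

lemma f_rec0: "2 \<le> M \<Longrightarrow> f M 0 = f (M - 1) 0 * (1 - u / q ^ (M - 1))"
  using Q_rec by (simp add: f_M0)


end


context ysetup begin
lemma core: "1 \<le> M \<Longrightarrow> 1 \<le> c \<Longrightarrow> c \<le> n \<Longrightarrow>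
  edge_wt q u (gam (c - 1)) (gam c) * (h c M - h c (M - 1)) = h (c - 1) M * (u / q ^ M * colp M c)"
proof -
  assume M: "1 \<le> M" and c: "1 \<le> c" "c \<le> n"
  define a where "a = clen (Pc (c - 1)) 1"
  define A where "A = (\<Prod>i<a. 1 - q ^ i / q ^ M)"
  define B where "B = (\<Prod>i<a. 1 - q ^ i / q ^ (M - 1))"
  have key: "A * (1 - q ^ a / q ^ M) = (1 - 1 / q ^ M) * B"
    unfolding A_def B_def by (rule H_key[OF q1 M])
  have y: "q ^ M > 1" using q1 M by (simp add: one_less_power)
  have hc1: "h (c - 1) M = A" unfolding h_def A_def a_def ..
  have Mq: "q ^ M = q * q ^ (M - 1)"
  proof -
    have "M = Suc (M - 1)" using M by simp
    then show ?thesis by (metis power_Suc)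
  qed
  show ?thesis
  proof (cases "col c = 1")
    case True
    have cl: "clen (Pc c) 1 = Suc a" using clen_Pc_step[OF c, of 1] True a_def by simp
    have hM: "h c M = A * (1 - q ^ a / q ^ M)" unfolding h_def cl A_def by simp
    have hM1: "h c (M - 1) = B * (1 - q * q ^ a / q ^ M)"
    proof -
      have "q ^ a / q ^ (M - 1) = q * q ^ a / q ^ M" unfolding Mq using q1 by simp
      then show ?thesis unfolding h_def cl B_def by simp
    qed
    have e: "edge_wt q u (gam (c - 1)) (gam c) = u / (q ^ a * (q * q ^ a - 1))"
      using edge_eq[OF c] True a_def by simp
    have cp: "colp M c = (q ^ M / q ^ a - 1) / (q ^ M - 1)"
      unfolding colp_def colprob_def using True a_def by simp
    show ?thesis unfolding e hM hM1 hc1 cp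
      by (rule alg_col1[OF q1 y _ key]) (use q1 in \<open>simp add: one_le_power\<close>)
  next
    case False
    then have cc: "1 < col c" using rc_pos[OF c] by simp
    have cl: "clen (Pc c) 1 = a" using clen_Pc_step[OF c, of 1] False a_def by simp
    have hM: "h c M = A" unfolding h_def cl A_def ..
    have hM1: "h c (M - 1) = B" unfolding h_def cl B_def ..
    define D where "D = 1 / q ^ clen (Pc (c - 1)) (col c) - 1 / q ^ clen (Pc (c - 1)) (col c - 1)"
    have e: "edge_wt q u (gam (c - 1)) (gam c) = u * D / (q ^ a - 1)"
      using edge_eq[OF c] False a_def D_def by simp
    have cp: "colp M c = q ^ M * D / (q ^ M - 1)"
      unfolding colp_def colprob_def D_def using False by (simp add: right_diff_distrib)
    have z: "q ^ a > 1" using clen_Pc_col1[OF c cc] q1 a_def by (simp add: one_less_power)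
    show ?thesis unfolding e hM hM1 hc1 cp
      by (rule alg_col2[OF y z key])
  qed
qed

lemma W_Suc: "1 \<le> c \<Longrightarrow> W c = W (c - 1) * edge_wt q u (gam (c - 1)) (gam c)"
proof -
  assume "1 \<le> c"
  then obtain c' where c': "c = Suc c'" by (cases c) auto
  show ?thesis unfolding W_def c' by simp
qed

lemma f_rec: "1 \<le> M \<Longrightarrow> 1 \<le> c \<Longrightarrow> c \<le> n \<Longrightarrow>
  f M c = f (M - 1) c * (1 - u / q ^ (M - 1)) + f M (c - 1) * (u / q ^ M * colp M c)"
proof -
  assume M: "1 \<le> M" and c: "1 \<le> c" "c \<le> n"
  have t1: "f (M - 1) c * (1 - u / q ^ (M - 1)) = Q M * W c * h c (M - 1)"
  proof (cases "M = 1")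
    case True then show ?thesis using f_0[OF c] h_0[OF c] by simp
  next
    case False
    then have "2 \<le> M" using M by simp
    then show ?thesis unfolding f_def using Q_rec by simp
  qed
  define E where "E = edge_wt q u (gam (c - 1)) (gam c)"
  have "f M c - Q M * W c * h c (M - 1) = Q M * W c * (h c M - h c (M - 1))"
    unfolding f_def by (simp add: right_diff_distrib)
  also have "\<dots> = Q M * W (c - 1) * (E * (h c M - h c (M - 1)))"
    unfolding W_Suc[OF c(1)] E_def by simp
  also have "\<dots> = f M (c - 1) * (u / q ^ M * colp M c)"
    unfolding E_def core[OF M c] f_def by simp
  finally show ?thesis unfolding t1 by simp
qed

end



abbreviation U :: "real measure" where "U \<equiv> uniform_measure lborel {0..1::real}"

lemma U_gen: "B \<in> sets borel \<Longrightarrow> emeasure U B = emeasure lborel ({0..1} \<inter> B)"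
  by (simp add: divide_ennreal_def)

lemma U_Ico: "0 \<le> a \<Longrightarrow> a \<le> b \<Longrightarrow> b \<le> 1 \<Longrightarrow> emeasure U {a..<b} = b - a"
proof -
  assume "0 \<le> a" "a \<le> b" "b \<le> 1"
  then have "{0..1} \<inter> {a..<b} = {a..<b}" by auto
  then show ?thesis using \<open>a \<le> b\<close> by (simp add: U_gen del: emeasure_uniform_measure)
qed

lemma U_lt: "0 \<le> a \<Longrightarrow> a \<le> 1 \<Longrightarrow> emeasure U {..<a} = a"
proof -
  assume "0 \<le> a" "a \<le> 1"
  then have "{0..1} \<inter> {..<a} = {0..<a}" by auto
  then show ?thesis using \<open>0 \<le> a\<close> by (simp add: U_gen del: emeasure_uniform_measure)
qed

lemma U_ge: "0 \<le> a \<Longrightarrow> a \<le> 1 \<Longrightarrow> emeasure U {a..} = 1 - a"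
proof -
  assume "0 \<le> a" "a \<le> 1"
  then have "{0..1} \<inter> {a..} = {a..1}" by auto
  then show ?thesis using \<open>a \<le> 1\<close> by (simp add: U_gen del: emeasure_uniform_measure)
qed

lemma U_UNIV: "emeasure U UNIV = 1"
  by (simp add: U_gen del: emeasure_uniform_measure)

lemma U_out: "emeasure U (- {0..<1}) = 0"
proof -
  have "{0..1} \<inter> - {0..<1} = {1::real}" by auto
  then show ?thesis by (simp add: U_gen del: emeasure_uniform_measure)
qed

lemma sfU: "sigma_finite_measure U"
  by (intro prob_space_imp_sigma_finite prob_space_uniform_measure) auto

lemma mu_Times: "A \<in> sets borel \<Longrightarrow> B \<in> sets borel \<Longrightarrow> emeasure mu (A \<times> B) = emeasure U A * emeasure U B"
  unfolding mu_def by (rule sigma_finite_measure.emeasure_pair_measure_Times[OF sfU]) auto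

lemma sets_mu: "sets mu = sets (borel \<Otimes>\<^sub>M borel)"
  unfolding mu_def by (intro sets_pair_measure_cong) auto

lemma least_char:
  fixes g :: "nat \<Rightarrow> real"
  assumes mono: "\<And>s. g s \<le> g (Suc s)" and g0: "g 0 \<le> y" and ex: "y < g S"
  shows "(LEAST s. 1 \<le> s \<and> y < g s) = s0 \<longleftrightarrow> (1 \<le> s0 \<and> g (s0 - 1) \<le> y \<and> y < g s0)"
proof -
  have gm: "a \<le> b \<Longrightarrow> g a \<le> g b" for a b using lift_Suc_mono_le[of g, OF mono] by blast
  define L where "L = (LEAST s. 1 \<le> s \<and> y < g s)"
  have P: "1 \<le> Suc S \<and> y < g (Suc S)" using ex gm[of S "Suc S"] by simp
  have L1: "1 \<le> L \<and> y < g L" unfolding L_def by (rule LeastI[of _ "Suc S"]) (rule P)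
  have L2: "s < L \<Longrightarrow> \<not> (1 \<le> s \<and> y < g s)" for s unfolding L_def by (rule not_less_Least)
  have LR: "g (L - 1) \<le> y"
  proof (cases "L = 1")
    case True then show ?thesis using g0 by simp
  next
    case False then have "1 \<le> L - 1" "L - 1 < L" using L1 by auto
    then show ?thesis using L2[of "L - 1"] by simp
  qed
  show ?thesis
  proof
    assume "(LEAST s. 1 \<le> s \<and> y < g s) = s0"
    then show "1 \<le> s0 \<and> g (s0 - 1) \<le> y \<and> y < g s0" using L1 LR L_def by auto
  next
    assume s0: "1 \<le> s0 \<and> g (s0 - 1) \<le> y \<and> y < g s0"
    have "L \<le> s0" unfolding L_def by (rule Least_le) (use s0 in simp)
    moreover have "\<not> L < s0"
    proof
      assume "L < s0"
      then have "g L \<le> g (s0 - 1)" using gm by simp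
      then show False using s0 L1 by simp
    qed
    ultimately show "(LEAST s. 1 \<le> s \<and> y < g s) = s0" using L_def by simp
  qed
qed

context ysetup begin

definition sig :: "nat \<Rightarrow> nat \<Rightarrow> ystate" where "sig M c = (M, Pc c, c)"
definition Tl :: "nat \<Rightarrow> (real \<times> real) set" where "Tl r = {xy. u / q ^ r \<le> fst xy}"
definition Hd :: "nat \<Rightarrow> nat \<Rightarrow> (real \<times> real) set" where
  "Hd M c = {xy. fst xy < u / q ^ M \<and> (LEAST s. 1 \<le> s \<and> snd xy < (\<Sum>t = 1..s. colprob q M (Pc (c - 1)) t)) = col c}"

lemma a_bounds: "0 \<le> u / q ^ r" "u / q ^ r \<le> 1"
proof -
  have "q ^ r \<ge> 1" using q1 by (simp add: one_le_power)
  then show "0 \<le> u / q ^ r" "u / q ^ r \<le> 1" using u0 u1 by (auto simp: divide_le_eq)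
qed

lemma Tl_sets: "Tl r \<in> sets mu"
proof -
  have "Tl r = {u / q ^ r..} \<times> UNIV" unfolding Tl_def by auto
  then show ?thesis unfolding sets_mu by simp
qed

lemma meas_Tl: "measure mu (Tl r) = 1 - u / q ^ r"
proof -
  have "Tl r = {u / q ^ r..} \<times> UNIV" unfolding Tl_def by auto
  then have "emeasure mu (Tl r) = ennreal (1 - u / q ^ r)"
    using mu_Times[of "{u / q ^ r..}" UNIV] U_ge[OF a_bounds] U_UNIV by simp
  then show ?thesis unfolding measure_def using a_bounds by simp
qed

lemma Hd_sets: "Hd M c \<in> sets mu"
proof -
  have "{xy \<in> space (borel \<Otimes>\<^sub>M borel). fst xy < u / q ^ M \<and> (LEAST s. 1 \<le> s \<and> snd xy < (\<Sum>t = 1..s. colprob q M (Pc (c - 1)) t)) = col c} \<in> sets (borel \<Otimes>\<^sub>M borel)"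
    by measurable
  then show ?thesis unfolding sets_mu Hd_def by (simp add: space_pair_measure)
qed

lemma csum_eq: "1 \<le> s \<Longrightarrow> (\<Sum>t = 1..s. colprob q M Tab t) = (q ^ M / q ^ clen Tab s - 1) / (q ^ M - 1)"
proof (induction s)
  case 0 then show ?case by simp
next
  case (Suc s)
  show ?case
  proof (cases "s = 0")
    case True then show ?thesis by (simp add: colprob_def)
  next
    case False
    then have IH: "(\<Sum>t = 1..s. colprob q M Tab t) = (q ^ M / q ^ clen Tab s - 1) / (q ^ M - 1)"
      using Suc.IH by simp
    have "(\<Sum>t = 1..Suc s. colprob q M Tab t) = (\<Sum>t = 1..s. colprob q M Tab t) + colprob q M Tab (Suc s)"
      by simp
    also have "\<dots> = (q ^ M / q ^ clen Tab s - 1) / (q ^ M - 1) + colprob q M Tab (Suc s)"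
      using IH by simp
    also have "\<dots> = (q ^ M / q ^ clen Tab (Suc s) - 1) / (q ^ M - 1)"
      using False by (simp add: colprob_def diff_divide_distrib)
    finally show ?thesis .
  qed
qed

lemma meas_Hd:
  assumes M: "1 \<le> M" and c: "1 \<le> c" "c \<le> n" and a: "clen (Pc (c - 1)) 1 \<le> M"
  shows "measure mu (Hd M c) = u / q ^ M * colp M c"
proof -
  define P where "P = Pc (c - 1)"
  define y where "y = (q ^ M :: real)"
  have y1: "y > 1" unfolding y_def using q1 M by (simp add: one_less_power)
  define g where "g s = (if s = 0 then 0 else (y / q ^ clen P s - 1) / (y - 1))" for s
  define s0 where "s0 = col c"
  have s01: "1 \<le> s0" unfolding s0_def using rc_pos[OF c] by simp
  have qpos: "q ^ k > 0" for k using q1 by simp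
  have gle: "y / q ^ k \<le> y" for k using y1 q1 by (simp add: divide_le_eq one_le_power mult_le_cancel_left1) 
  have gmono: "g s \<le> g (Suc s)" for s
  proof (cases "s = 0")
    case True
    have "q ^ clen P 1 \<le> y" unfolding y_def P_def using a q1 by (simp add: power_increasing)
    then have "1 \<le> y / q ^ clen P 1" using qpos by (simp add: le_divide_eq)
    then show ?thesis using True y1 by (simp add: g_def)
  next
    case False
    have "clen P (Suc s) \<le> clen P s" unfolding P_def using clen_Pc_mono False by simp
    then have "q ^ clen P (Suc s) \<le> q ^ clen P s" using q1 by (simp add: power_increasing)
    then have "y / q ^ clen P s \<le> y / q ^ clen P (Suc s)" using y1 qpos by (simp add: frac_le)
    then show ?thesis using False y1 by (simp add: g_def divide_right_mono)
  qed
  have gm: "a \<le> b \<Longrightarrow> g a \<le> g b" for a b using lift_Suc_mono_le[of g, OF gmono] by blast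
  have g0: "0 \<le> g s" for s using gm[of 0 s] by (simp add: g_def)
  have g1: "g s \<le> 1" for s using gle[of "clen P s"] y1 by (simp add: g_def divide_le_eq)
  obtain S where S: "\<forall>s\<ge>S. clen P s = 0" unfolding P_def using clen_Pc_large by blast
  have gS: "g (Suc S) = 1" using S y1 by (simp add: g_def)
  have csum: "(\<Sum>t = 1..s. colprob q M P t) = g s" if "1 \<le> s" for s
    using csum_eq[OF that, of M P] that by (simp add: g_def y_def)
  have pred: "(\<lambda>s. 1 \<le> s \<and> yy < (\<Sum>t = 1..s. colprob q M P t)) = (\<lambda>s. 1 \<le> s \<and> yy < g s)" for yy
    using csum by auto
  define G where "G = (UNIV :: real set) \<times> {0..<1::real}"
  have hd_iff: "(x, yy) \<in> Hd M c \<longleftrightarrow> x < u / q ^ M \<and> (LEAST s. 1 \<le> s \<and> yy < g s) = s0" for x yy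
  proof -
    have e: "(\<lambda>s. 1 \<le> s \<and> yy < (\<Sum>t = 1..s. colprob q M (Pc (c - 1)) t)) = (\<lambda>s. 1 \<le> s \<and> yy < g s)"
      using pred[of yy] unfolding P_def .
    show ?thesis unfolding Hd_def mem_Collect_eq fst_conv snd_conv s0_def e ..
  qed
  have HG: "Hd M c \<inter> G = {..<u / q ^ M} \<times> {g (s0 - 1)..<g s0}"
  proof (intro set_eqI iffI)
    fix xy assume xy: "xy \<in> Hd M c \<inter> G"
    obtain x yy where e: "xy = (x, yy)" by (cases xy)
    have "(LEAST s. 1 \<le> s \<and> yy < g s) = s0" using xy unfolding e by (simp add: hd_iff)
    moreover have "g 0 \<le> yy" "yy < g (Suc S)" using xy gS unfolding e G_def by (auto simp: g_def)
    ultimately have "1 \<le> s0 \<and> g (s0 - 1) \<le> yy \<and> yy < g s0"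
      using least_char[of g yy "Suc S" s0, OF gmono] by blast
    then show "xy \<in> {..<u / q ^ M} \<times> {g (s0 - 1)..<g s0}" using xy unfolding e by (simp add: hd_iff)
  next
    fix xy assume xy: "xy \<in> {..<u / q ^ M} \<times> {g (s0 - 1)..<g s0}"
    obtain x yy where e: "xy = (x, yy)" by (cases xy)
    have yy: "0 \<le> yy" "yy < 1" using xy g0[of "s0 - 1"] g1[of s0] unfolding e by auto
    have "g 0 \<le> yy" "yy < g (Suc S)" using yy gS by (auto simp: g_def)
    moreover have "1 \<le> s0 \<and> g (s0 - 1) \<le> yy \<and> yy < g s0" using xy s01 unfolding e by simp
    ultimately have "(LEAST s. 1 \<le> s \<and> yy < g s) = s0"
      using least_char[of g yy "Suc S" s0, OF gmono] by blast
    then show "xy \<in> Hd M c \<inter> G" using xy yy unfolding e G_def by (simp add: hd_iff)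
  qed
  have Gs: "G \<in> sets mu" unfolding G_def sets_mu by simp
  have null: "Hd M c - G \<in> null_sets mu"
  proof (rule null_sets_subset)
    have "emeasure mu (UNIV \<times> - {0..<1}) = 0" using mu_Times[of UNIV "- {0..<1}"] U_out by simp
    then show "UNIV \<times> - {0..<1::real} \<in> null_sets mu" unfolding null_sets_def sets_mu by simp
    show "Hd M c - G \<in> sets mu" using Hd_sets Gs by auto
    show "Hd M c - G \<subseteq> UNIV \<times> - {0..<1}" unfolding G_def by auto
  qed
  have "measure mu (Hd M c) = measure mu ((Hd M c \<inter> G) \<union> (Hd M c - G))"
    by (rule arg_cong[where f = "measure mu"]) auto
  also have "\<dots> = measure mu (Hd M c \<inter> G)"
    by (rule measure_Un_null_set) (use Hd_sets Gs null in auto)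
  also have "\<dots> = u / q ^ M * (g s0 - g (s0 - 1))"
  proof -
    have "emeasure mu (Hd M c \<inter> G) = ennreal (u / q ^ M) * ennreal (g s0 - g (s0 - 1))"
      unfolding HG using mu_Times[of "{..<u / q ^ M}" "{g (s0 - 1)..<g s0}"]
        U_lt[OF a_bounds] U_Ico[OF g0 gm g1, of "s0 - 1" s0] by simp
    moreover have "0 \<le> u / q ^ M * (g s0 - g (s0 - 1))" using a_bounds(1)[of M] gm[of "s0 - 1" s0]
      by (intro mult_nonneg_nonneg) auto
    ultimately show ?thesis unfolding measure_def using a_bounds gm[of "s0 - 1" s0]
      by (simp add: ennreal_mult'[symmetric] del: times_divide_eq_left)
  qed
  also have "g s0 - g (s0 - 1) = colp M c"
  proof (cases "s0 = 1")
    case True then show ?thesis unfolding colp_def colprob_def s0_def[symmetric] P_def[symmetric] y_def[symmetric]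
      by (simp add: g_def)
  next
    case False
    then show ?thesis using s01 unfolding colp_def colprob_def s0_def[symmetric] P_def[symmetric] y_def[symmetric]
      by (simp add: g_def diff_divide_distrib)
  qed
  finally show ?thesis .
qed

end



definition yinv :: "nat \<Rightarrow> ystate \<Rightarrow> bool" where
  "yinv k st \<longleftrightarrow> (case st of (N, Tab, c) \<Rightarrow> 1 \<le> N \<and> N + c = k + 1 \<and> (\<forall>b. Tab b \<le> c) \<and>
     (0 < c \<longrightarrow> (\<exists>b. Tab b = c)) \<and> (\<forall>s. finite {i. Tab (i, s) \<noteq> 0}) \<and>
     (\<forall>i s. Tab (i, s) \<noteq> 0 \<longrightarrow> i \<le> clen Tab s))"

lemma add_box:
  fixes s :: nat and Tab :: tab
  assumes fin: "\<forall>s. finite {i. Tab (i, s) \<noteq> 0}" and cont: "\<forall>i s. Tab (i, s) \<noteq> 0 \<longrightarrow> i \<le> clen Tab s"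
    and v: "v \<noteq> 0"
  defines "Tab' \<equiv> Tab((clen Tab s + 1, s) := v)"
  shows "Tab (clen Tab s + 1, s) = 0"
    and "clen Tab' s' = clen Tab s' + (if s' = s then 1 else 0)"
    and "\<forall>s. finite {i. Tab' (i, s) \<noteq> 0}"
    and "\<forall>i s. Tab' (i, s) \<noteq> 0 \<longrightarrow> i \<le> clen Tab' s"
proof -
  show z: "Tab (clen Tab s + 1, s) = 0" using cont by force
  have cs: "{i. Tab' (i, s') \<noteq> 0} = (if s' = s then insert (clen Tab s + 1) {i. Tab (i, s') \<noteq> 0} else {i. Tab (i, s') \<noteq> 0})" for s'
    unfolding Tab'_def using v by auto
  have nm: "clen Tab s + 1 \<notin> {i. Tab (i, s) \<noteq> 0}" using z by simp
  show cl: "clen Tab' s' = clen Tab s' + (if s' = s then 1 else 0)" for s'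
  proof (cases "s' = s")
    case True
    then show ?thesis unfolding clen_def[of Tab'] cs using card_insert_disjoint[OF fin[rule_format] nm]
      by (simp add: clen_def)
  next
    case False then show ?thesis unfolding clen_def cs by simp
  qed
  show "\<forall>s. finite {i. Tab' (i, s) \<noteq> 0}" unfolding cs using fin by auto
  show "\<forall>i s. Tab' (i, s) \<noteq> 0 \<longrightarrow> i \<le> clen Tab' s"
  proof (intro allI impI)
    fix i s' assume "Tab' (i, s') \<noteq> 0"
    then have "i \<in> {i. Tab' (i, s') \<noteq> 0}" by simp
    then show "i \<le> clen Tab' s'" unfolding cs cl using cont by (auto split: if_splits simp: le_Suc_eq)
  qed
qed

lemma yinv_step: "yinv k st \<Longrightarrow> yinv (Suc k) (ystep q u xy st)"
proof -
  assume I: "yinv k st"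
  obtain N Tab c where st: "st = (N, Tab, c)" by (cases st) auto
  show ?thesis
  proof (cases "fst xy < u / q ^ N")
    case False
    then show ?thesis using I unfolding st ystep_def yinv_def by auto
  next
    case True
    define s where "s = (LEAST s. 1 \<le> s \<and> snd xy < (\<Sum>t = 1..s. colprob q N Tab t))"
    have e: "ystep q u xy st = (N, Tab((clen Tab s + 1, s) := c + 1), c + 1)"
      unfolding st ystep_def s_def using True by (simp add: Let_def)
    have fin: "\<forall>s. finite {i. Tab (i, s) \<noteq> 0}" and cont: "\<forall>i s. Tab (i, s) \<noteq> 0 \<longrightarrow> i \<le> clen Tab s"
      using I unfolding st yinv_def by auto
    note ab = add_box[OF fin cont, of "c + 1" s]
    show ?thesis unfolding e yinv_def using I ab(3,4) unfolding st yinv_def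
      by (auto simp: le_Suc_eq)
  qed
qed

lemma yinv_run: "yinv k (yrun q u \<omega> k)"
proof (induction k)
  case 0 then show ?case by (simp add: yinv_def clen_def)
next
  case (Suc k) then show ?case by (simp add: yinv_step)
qed

context ysetup begin

lemma step_char:
  assumes I: "yinv k st" and M: "1 \<le> M" and c: "c \<le> n"
  shows "ystep q u xy st = sig M c \<longleftrightarrow>
    ((st = sig (M - 1) c \<and> xy \<in> Tl (M - 1)) \<or> (1 \<le> c \<and> st = sig M (c - 1) \<and> xy \<in> Hd M c))"
proof -
  obtain N Tab c' where st: "st = (N, Tab, c')" by (cases st) auto
  have fin: "\<forall>s. finite {i. Tab (i, s) \<noteq> 0}" and cont: "\<forall>i s. Tab (i, s) \<noteq> 0 \<longrightarrow> i \<le> clen Tab s"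
    and N1: "1 \<le> N"
    using I unfolding st yinv_def by auto
  show ?thesis
  proof
    assume H: "ystep q u xy st = sig M c"
    show "(st = sig (M - 1) c \<and> xy \<in> Tl (M - 1)) \<or> (1 \<le> c \<and> st = sig M (c - 1) \<and> xy \<in> Hd M c)"
    proof (cases "fst xy < u / q ^ N")
      case True
      define s where "s = (LEAST s. 1 \<le> s \<and> snd xy < (\<Sum>t = 1..s. colprob q N Tab t))"
      define p where "p = (clen Tab s + 1, s)"
      have e: "ystep q u xy st = (N, Tab(p := c' + 1), c' + 1)"
        unfolding st ystep_def s_def p_def using True by (simp add: Let_def)
      have NM: "N = M" and cc: "c = c' + 1" and TP: "Tab(p := c) = Pc c"
        using H unfolding e sig_def by auto
      have c1: "1 \<le> c" using cc by simp
      have "Pc c p = c" using fun_cong[OF TP, of p] by simp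
      then have Tp: "T p = c" unfolding Pc_def using c1 by (auto split: if_splits)
      have pp: "p = pos c" by (rule pos_unique[OF Tp c1 c])
      have sc: "s = col c" unfolding col_def pp[symmetric] p_def by simp
      have z: "Tab p = 0" unfolding p_def using add_box(1)[OF fin cont, of 1 s] by simp
      have TabP: "Tab = Pc (c - 1)"
      proof
        fix b show "Tab b = Pc (c - 1) b"
        proof (cases "b = p")
          case True then show ?thesis using z Tp c1 by (simp add: Pc_def)
        next
          case False
          have "Tab b = (Tab(p := c)) b" using False by simp
          also have "\<dots> = Pc c b" unfolding TP ..
          also have "\<dots> = Pc (c - 1) b" unfolding Pc_Suc[OF c1 c] pp[symmetric] using False by simp
          finally show ?thesis .
        qed
      qed
      have "st = sig M (c - 1)" unfolding st sig_def TabP NM cc by simp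
      moreover have "xy \<in> Hd M c" unfolding Hd_def using True sc unfolding s_def TabP NM by simp
      ultimately show ?thesis using c1 by simp
    next
      case False
      have e: "ystep q u xy st = (Suc N, Tab, c')" unfolding st ystep_def using False by simp
      then have "Suc N = M" "Tab = Pc c" "c' = c" using H unfolding sig_def by auto
      then have "st = sig (M - 1) c" "xy \<in> Tl (M - 1)" unfolding st sig_def Tl_def using False by auto
      then show ?thesis by simp
    qed
  next
    assume "(st = sig (M - 1) c \<and> xy \<in> Tl (M - 1)) \<or> (1 \<le> c \<and> st = sig M (c - 1) \<and> xy \<in> Hd M c)"
    then show "ystep q u xy st = sig M c"
    proof
      assume A: "st = sig (M - 1) c \<and> xy \<in> Tl (M - 1)"
      then have "\<not> fst xy < u / q ^ (M - 1)" unfolding Tl_def by auto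
      then show ?thesis using A M unfolding sig_def ystep_def by simp
    next
      assume A: "1 \<le> c \<and> st = sig M (c - 1) \<and> xy \<in> Hd M c"
      then have c1: "1 \<le> c" by simp
      have h1: "fst xy < u / q ^ M" and h2: "(LEAST s. 1 \<le> s \<and> snd xy < (\<Sum>t = 1..s. colprob q M (Pc (c - 1)) t)) = col c"
        using A unfolding Hd_def by auto
      have rr: "clen (Pc (c - 1)) (col c) + 1 = row c" using clen_Pc_col[OF c1 c] rc_pos[OF c1 c] by simp
      have "ystep q u xy st = (M, (Pc (c - 1))(pos c := c - 1 + 1), c - 1 + 1)"
        using A h1 h2 rr unfolding sig_def ystep_def pos_rc by (simp add: Let_def)
      also have "\<dots> = sig M c" unfolding sig_def using c1 Pc_Suc[OF c1 c, symmetric] by simp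
      finally show ?thesis .
    qed
  qed
qed

lemma meas_yk: "B \<in> sets mu \<Longrightarrow>
  measure coin_space ({\<omega>. yrun q u \<omega> k = st} \<inter> {\<omega>. \<omega> k \<in> B}) = measure coin_space {\<omega>. yrun q u \<omega> k = st} * measure mu B"
proof -
  assume B: "B \<in> sets mu"
  have loc: "\<omega> \<in> {\<omega>. yrun q u \<omega> k = st} \<longleftrightarrow> \<omega>' \<in> {\<omega>. yrun q u \<omega> k = st}" if "\<forall>j<k. \<omega> j = \<omega>' j" for \<omega> \<omega>'
  proof -
    have "yrun q u \<omega> k = yrun q u \<omega>' k" by (rule yrun_loc) (use that in blast)
    then show ?thesis by simp
  qed
  show ?thesis by (rule indep_step[OF yrun_event loc B])
qed

lemma h_zero: "M < clen (Pc c) 1 \<Longrightarrow> h c M = 0"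
  unfolding h_def using q1 by (subst prod_zero_iff) (auto intro!: bexI[where x = M])

lemma coin_Union: "A \<in> sets coin_space \<Longrightarrow> B \<in> sets coin_space \<Longrightarrow> A \<inter> B = {} \<Longrightarrow>
  measure coin_space (A \<union> B) = measure coin_space A + measure coin_space B"
proof -
  interpret PC: prob_space coin_space by (rule prob_coin)
  assume "A \<in> sets coin_space" "B \<in> sets coin_space" "A \<inter> B = {}"
  then show ?thesis by (rule PC.finite_measure_Union)
qed

lemma coin_1: "measure coin_space UNIV = 1"
proof -
  interpret PC: prob_space coin_space by (rule prob_coin)
  show ?thesis using PC.prob_space by simp
qed

lemma M0: "measure coin_space {\<omega>. yrun q u \<omega> k = sig 0 c} = 0"
proof -
  have "yrun q u \<omega> k \<noteq> sig 0 c" for \<omega>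
    using yinv_run[of k q u \<omega>] by (cases "yrun q u \<omega> k") (simp add: sig_def yinv_def)
  then have "{\<omega>. yrun q u \<omega> k = sig 0 c} = {}" by auto
  then show ?thesis by simp
qed

lemma R_base: "M + c = Suc 0 \<Longrightarrow> c \<le> n \<Longrightarrow> measure coin_space {\<omega>. yrun q u \<omega> 0 = sig M c} = f M c"
proof (cases "M = 0")
  case True
  assume Mc: "M + c = Suc 0" "c \<le> n"
  have "f 0 c = 0" using f_0 Mc True by simp
  then show ?thesis unfolding True M0 by simp
next
  case False
  assume Mc: "M + c = Suc 0" "c \<le> n"
  then have "M = 1" "c = 0" using False by auto
  moreover have "{\<omega>. yrun q u \<omega> 0 = sig 1 0} = UNIV" by (simp add: sig_def Pc_0)
  ultimately show ?thesis using f_10 coin_1 by simp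
qed

lemma R_step:
  assumes IH: "\<forall>M c. M + c = Suc k \<longrightarrow> c \<le> n \<longrightarrow> measure coin_space {\<omega>. yrun q u \<omega> k = sig M c} = f M c"
  shows "\<forall>M c. M + c = Suc (Suc k) \<longrightarrow> c \<le> n \<longrightarrow> measure coin_space {\<omega>. yrun q u \<omega> (Suc k) = sig M c} = f M c"
proof (intro allI impI)
    fix M c assume Mc: "M + c = Suc (Suc k)" "c \<le> n"
    show "measure coin_space {\<omega>. yrun q u \<omega> (Suc k) = sig M c} = f M c"
    proof (cases "M = 0")
      case True
      have "f 0 c = 0" using f_0 Mc True by simp
      then show ?thesis unfolding True M0 by simp
    next
      case False
      then have M1: "1 \<le> M" by simp
      have ev: "{\<omega>. yrun q u \<omega> (Suc k) = sig M c} =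
        ({\<omega>. yrun q u \<omega> k = sig (M - 1) c} \<inter> {\<omega>. \<omega> k \<in> Tl (M - 1)}) \<union>
        (if 1 \<le> c then {\<omega>. yrun q u \<omega> k = sig M (c - 1)} \<inter> {\<omega>. \<omega> k \<in> Hd M c} else {})"
      proof (intro set_eqI)
        fix \<omega>
        have "yrun q u \<omega> (Suc k) = sig M c \<longleftrightarrow> ((yrun q u \<omega> k = sig (M - 1) c \<and> \<omega> k \<in> Tl (M - 1)) \<or>
            (1 \<le> c \<and> yrun q u \<omega> k = sig M (c - 1) \<and> \<omega> k \<in> Hd M c))"
          using step_char[OF yinv_run M1 Mc(2)] by simp
        then show "\<omega> \<in> {\<omega>. yrun q u \<omega> (Suc k) = sig M c} \<longleftrightarrow> \<omega> \<in>
          ({\<omega>. yrun q u \<omega> k = sig (M - 1) c} \<inter> {\<omega>. \<omega> k \<in> Tl (M - 1)}) \<union>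
          (if 1 \<le> c then {\<omega>. yrun q u \<omega> k = sig M (c - 1)} \<inter> {\<omega>. \<omega> k \<in> Hd M c} else {})"
          by simp
      qed
      have m1: "measure coin_space ({\<omega>. yrun q u \<omega> k = sig (M - 1) c} \<inter> {\<omega>. \<omega> k \<in> Tl (M - 1)})
          = f (M - 1) c * (1 - u / q ^ (M - 1))"
      proof -
        have "M - 1 + c = Suc k" using Mc M1 by simp
        then have "measure coin_space {\<omega>. yrun q u \<omega> k = sig (M - 1) c} = f (M - 1) c"
          using IH Mc(2) by blast
        then show ?thesis unfolding meas_yk[OF Tl_sets] meas_Tl by simp
      qed
      have sets1: "{\<omega>. yrun q u \<omega> k = st} \<inter> {\<omega>. \<omega> k \<in> B} \<in> sets coin_space" if "B \<in> sets mu" for st B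
      proof -
        have "(\<lambda>\<omega>. \<omega> k) \<in> coin_space \<rightarrow>\<^sub>M mu" unfolding coin_space_eq by (rule measurable_component_singleton) auto
        from measurable_sets[OF this that] have "{\<omega>. \<omega> k \<in> B} \<in> sets coin_space" by (simp add: vimage_def)
        then show ?thesis using yrun_event by (rule sets.Int[rotated])
      qed
      show ?thesis
      proof (cases "c = 0")
        case True
        then have "2 \<le> M" using Mc by simp
        have ev0: "{\<omega>. yrun q u \<omega> (Suc k) = sig M c} = {\<omega>. yrun q u \<omega> k = sig (M - 1) c} \<inter> {\<omega>. \<omega> k \<in> Tl (M - 1)}"
          using ev True by simp
        have "measure coin_space {\<omega>. yrun q u \<omega> (Suc k) = sig M c} = f (M - 1) c * (1 - u / q ^ (M - 1))"
          unfolding ev0 m1 ..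
        then show ?thesis using f_rec0[OF \<open>2 \<le> M\<close>] True by simp
      next
        case False
        then have c1: "1 \<le> c" by simp
        have m2: "measure coin_space ({\<omega>. yrun q u \<omega> k = sig M (c - 1)} \<inter> {\<omega>. \<omega> k \<in> Hd M c})
            = f M (c - 1) * (u / q ^ M * colp M c)"
        proof -
          have "measure coin_space ({\<omega>. yrun q u \<omega> k = sig M (c - 1)} \<inter> {\<omega>. \<omega> k \<in> Hd M c})
              = f M (c - 1) * measure mu (Hd M c)"
          proof -
            have "M + (c - 1) = Suc k" "c - 1 \<le> n" using Mc c1 by auto
            then have "measure coin_space {\<omega>. yrun q u \<omega> k = sig M (c - 1)} = f M (c - 1)"
              using IH by blast
            then show ?thesis unfolding meas_yk[OF Hd_sets] by simp
          qed
          also have "\<dots> = f M (c - 1) * (u / q ^ M * colp M c)"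
          proof (cases "clen (Pc (c - 1)) 1 \<le> M")
            case True then show ?thesis using meas_Hd[OF M1 c1 Mc(2)] by simp
          next
            case False then show ?thesis using h_zero[of M "c - 1"] by (simp add: f_def)
          qed
          finally show ?thesis .
        qed
        have disj: "({\<omega>. yrun q u \<omega> k = sig (M - 1) c} \<inter> {\<omega>. \<omega> k \<in> Tl (M - 1)}) \<inter>
            ({\<omega>. yrun q u \<omega> k = sig M (c - 1)} \<inter> {\<omega>. \<omega> k \<in> Hd M c}) = {}"
          using c1 by (auto simp: sig_def)
        have ev1: "{\<omega>. yrun q u \<omega> (Suc k) = sig M c} =
          ({\<omega>. yrun q u \<omega> k = sig (M - 1) c} \<inter> {\<omega>. \<omega> k \<in> Tl (M - 1)}) \<union>
          ({\<omega>. yrun q u \<omega> k = sig M (c - 1)} \<inter> {\<omega>. \<omega> k \<in> Hd M c})"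
          using ev c1 by simp
        show ?thesis
          unfolding ev1 coin_Union[OF sets1[OF Tl_sets] sets1[OF Hd_sets] disj] m1 m2
          f_rec[OF M1 c1 Mc(2)] ..
      qed
    qed
  qed

lemma R_main: "\<forall>M c. M + c = Suc k \<longrightarrow> c \<le> n \<longrightarrow> measure coin_space {\<omega>. yrun q u \<omega> k = sig M c} = f M c"
proof (induction k)
  case 0 then show ?case using R_base by blast
next
  case (Suc k) then show ?case by (rule R_step)
qed

end




context ysetup begin

definition DJ :: "nat \<Rightarrow> nat \<Rightarrow> (nat \<Rightarrow> real \<times> real) set" where
  "DJ M J = (\<Inter>j\<in>{..J}. {\<omega>. yrun q u \<omega> (M - 1 + n + j) = sig (M + j) n})"

definition EM :: "nat \<Rightarrow> (nat \<Rightarrow> real \<times> real) set" where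
  "EM M = (\<Inter>j. {\<omega>. yrun q u \<omega> (M - 1 + n + j) = sig (M + j) n})"

lemma UNIV_sets: "UNIV \<in> sets coin_space"
  using sets.top[of coin_space] by simp

lemma DJ_sets: "DJ M J \<in> sets coin_space"
  unfolding DJ_def by (rule sets.countable_INT''[OF UNIV_sets]) (auto intro: yrun_event)

lemma EM_sets: "EM M \<in> sets coin_space"
  unfolding EM_def by (rule sets.countable_INT''[OF UNIV_sets]) (auto intro: yrun_event)

lemma EM_DJ: "EM M = (\<Inter>J. DJ M J)"
  unfolding EM_def DJ_def by auto

lemma DJ_dec: "decseq (DJ M)"
  unfolding decseq_def DJ_def by auto

lemma DJ_Suc: "1 \<le> M \<Longrightarrow> DJ M (Suc J) = DJ M J \<inter> {\<omega>. \<omega> (M - 1 + n + J) \<in> Tl (M + J)}"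
proof -
  assume M: "1 \<le> M"
  define k where "k = M - 1 + n + J"
  have sc: "yrun q u \<omega> (Suc k) = sig (M + J + 1) n \<longleftrightarrow> \<omega> k \<in> Tl (M + J)"
    if H: "yrun q u \<omega> k = sig (M + J) n" for \<omega>
  proof -
    have "yrun q u \<omega> (Suc k) = ystep q u (\<omega> k) (yrun q u \<omega> k)" by simp
    moreover have "ystep q u (\<omega> k) (yrun q u \<omega> k) = sig (M + J + 1) n \<longleftrightarrow>
      ((yrun q u \<omega> k = sig (M + J) n \<and> \<omega> k \<in> Tl (M + J)) \<or>
       (1 \<le> n \<and> yrun q u \<omega> k = sig (M + J + 1) (n - 1) \<and> \<omega> k \<in> Hd (M + J + 1) n))"
      using step_char[OF yinv_run[of k q u \<omega>], of "M + J + 1" n "\<omega> k"] by simp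
    ultimately show ?thesis using H by (simp add: sig_def)
  qed
  have D: "DJ M (Suc J) = DJ M J \<inter> {\<omega>. yrun q u \<omega> (Suc k) = sig (M + J + 1) n}"
    unfolding DJ_def k_def by (auto simp: atMost_Suc)
  have DJk: "\<omega> \<in> DJ M J \<Longrightarrow> yrun q u \<omega> k = sig (M + J) n" for \<omega>
    unfolding DJ_def k_def by auto
  show ?thesis unfolding D k_def[symmetric] using sc DJk by blast
qed

lemma DJ_loc: "(\<forall>j<M - 1 + n + J. \<omega> j = \<omega>' j) \<Longrightarrow> \<omega> \<in> DJ M J \<longleftrightarrow> \<omega>' \<in> DJ M J"
proof -
  assume H: "\<forall>j<M - 1 + n + J. \<omega> j = \<omega>' j"
  have "yrun q u \<omega> (M - 1 + n + j) = yrun q u \<omega>' (M - 1 + n + j)" if "j \<le> J" for j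
    by (rule yrun_loc) (use H that in auto)
  then show ?thesis unfolding DJ_def by auto
qed

lemma P_DJ: "1 \<le> M \<Longrightarrow> measure coin_space (DJ M J) = W n * h n M * Pp (M - 1 + J)"
proof (induction J)
  case 0
  have D0: "DJ M 0 = {\<omega>. yrun q u \<omega> (M - 1 + n) = sig M n}" unfolding DJ_def by simp
  have e: "M + n = Suc (M - 1 + n)" using 0 by simp
  have "measure coin_space {\<omega>. yrun q u \<omega> (M - 1 + n) = sig M n} = f M n"
    by (rule R_main[of "M - 1 + n", rule_format, OF e order.refl])
  then have "measure coin_space (DJ M 0) = f M n" unfolding D0 .
  then show ?case unfolding f_def Q_def by simp
next
  case (Suc J)
  have "measure coin_space (DJ M (Suc J)) = measure coin_space (DJ M J) * measure mu (Tl (M + J))"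
    unfolding DJ_Suc[OF Suc.prems] by (rule indep_step[OF DJ_sets DJ_loc Tl_sets])
  also have "\<dots> = W n * h n M * Pp (M - 1 + J) * (1 - u / q ^ (M + J))"
    unfolding Suc.IH[OF Suc.prems] meas_Tl ..
  also have "\<dots> = W n * h n M * Pp (M - 1 + Suc J)"
  proof -
    have "Suc (M - 1 + J) = M + J" using Suc.prems by simp
    moreover have "Pp (M - 1 + Suc J) = Pp (M - 1 + J) * (1 - u / q ^ (Suc (M - 1 + J)))"
      unfolding add_Suc_right Pp_def by simp
    ultimately have "Pp (M - 1 + Suc J) = Pp (M - 1 + J) * (1 - u / q ^ (M + J))"
      by simp
    then show ?thesis by simp
  qed
  finally show ?case .
qed

definition gg :: "nat \<Rightarrow> real" where "gg i = 1 - u / q ^ Suc i"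

lemma Pp_lim: "Pp \<longlonglongrightarrow> prodinf gg"
proof -
  have "summable (\<lambda>i. norm (gg i - 1))"
  proof -
    have "summable (\<lambda>i. u / q * (1 / q) ^ i)" using q1 by (intro summable_mult summable_geometric) auto
    moreover have "norm (gg i - 1) = u / q * (1 / q) ^ i" for i
      using u0 q1 by (simp add: gg_def power_divide field_simps)
    ultimately show ?thesis by simp
  qed
  then have "convergent_prod gg" by (intro abs_convergent_prod_imp_convergent_prod summable_imp_abs_convergent_prod)
  then have "(\<lambda>m. \<Prod>i\<le>m. gg i) \<longlonglongrightarrow> prodinf gg" by (rule convergent_prod_LIMSEQ)
  then have "(\<lambda>m. Pp (Suc m)) \<longlonglongrightarrow> prodinf gg" unfolding Pp_def gg_def lessThan_Suc_atMost .
  then show ?thesis by (rule LIMSEQ_imp_Suc)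
qed

lemma P_EM: "1 \<le> M \<Longrightarrow> measure coin_space (EM M) = W n * h n M * prodinf gg"
proof -
  assume M: "1 \<le> M"
  interpret PC: prob_space coin_space by (rule prob_coin)
  have "(\<lambda>J. measure coin_space (DJ M J)) \<longlonglongrightarrow> measure coin_space (\<Inter>J. DJ M J)"
    by (rule PC.finite_Lim_measure_decseq) (use DJ_sets DJ_dec in auto)
  moreover have "(\<lambda>J. measure coin_space (DJ M J)) \<longlonglongrightarrow> W n * h n M * prodinf gg"
  proof -
    have "(\<lambda>J. Pp (J + (M - 1))) \<longlonglongrightarrow> prodinf gg" by (rule LIMSEQ_ignore_initial_segment[OF Pp_lim])
    then have "(\<lambda>J. W n * h n M * Pp (J + (M - 1))) \<longlonglongrightarrow> W n * h n M * prodinf gg" by (rule tendsto_mult_left)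
    then show ?thesis unfolding P_DJ[OF M] by (simp add: add.commute)
  qed
  ultimately show ?thesis unfolding EM_DJ using LIMSEQ_unique by blast
qed

lemma h_lim: "(\<lambda>M. h c M) \<longlonglongrightarrow> 1"
proof -
  have "(\<lambda>M. \<Prod>i<clen (Pc c) 1. 1 - q ^ i / q ^ M) \<longlonglongrightarrow> (\<Prod>i<clen (Pc c) 1. 1 - 0)"
  proof (intro tendsto_prod tendsto_diff tendsto_const)
    fix i
    have "(\<lambda>M. q ^ i * (1 / q) ^ M) \<longlonglongrightarrow> q ^ i * 0"
      using q1 by (intro tendsto_mult tendsto_const LIMSEQ_power_zero) auto
    moreover have "q ^ i * (1 / q) ^ M = q ^ i / q ^ M" for M by (simp add: power_divide)
    ultimately show "(\<lambda>M. q ^ i / q ^ M) \<longlonglongrightarrow> 0" by simp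
  qed
  then show ?thesis unfolding h_def by simp
qed

lemma outputs_eq: "outputs q u T = (\<Union>M. EM (Suc M))"
proof (intro set_eqI iffI)
  fix \<omega> assume "\<omega> \<in> outputs q u T"
  then obtain K where K: "\<forall>k\<ge>K. fst (snd (yrun q u \<omega> k)) = T" unfolding outputs_def by auto
  have "yrun q u \<omega> (K + n + j) = sig (Suc K + j) n" for j
  proof -
    obtain N Tab c where st: "yrun q u \<omega> (K + n + j) = (N, Tab, c)" by (cases "yrun q u \<omega> (K + n + j)") auto
    have Tab: "Tab = T" using K[rule_format, of "K + n + j"] st by simp
    have I: "N + c = K + n + j + 1" "\<forall>b. T b \<le> c" "0 < c \<longrightarrow> (\<exists>b. T b = c)"
      using yinv_run[of "K + n + j" q u \<omega>] unfolding st Tab yinv_def by auto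
    have cn: "c = n"
    proof (cases "n = 0")
      case True
      then have "T b = 0" for b using T_le[of b] by simp
      then show ?thesis using I(3) True by auto
    next
      case False
      then have "T (pos n) = n" using T_pos_eq[of n] by simp
      then have "n \<le> c" using I(2)[rule_format, of "pos n"] by simp
      then have "\<exists>b. T b = c" using I(3) False by simp
      then obtain b where "T b = c" by blast
      then have "c \<le> n" using T_le[of b] by simp
      then show ?thesis using \<open>n \<le> c\<close> by simp
    qed
    show ?thesis using I(1) cn by (simp add: st sig_def Tab Pc_n)
  qed
  then have "\<omega> \<in> EM (Suc K)" unfolding EM_def by simp
  then show "\<omega> \<in> (\<Union>M. EM (Suc M))" by blast
next
  fix \<omega> assume "\<omega> \<in> (\<Union>M. EM (Suc M))"
  then obtain M where M: "\<forall>j. yrun q u \<omega> (M + n + j) = sig (Suc M + j) n" unfolding EM_def by auto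
  have "\<forall>k\<ge>M + n. fst (snd (yrun q u \<omega> k)) = T"
  proof (intro allI impI)
    fix k assume "M + n \<le> k"
    then have "yrun q u \<omega> k = sig (Suc M + (k - (M + n))) n" using M[rule_format, of "k - (M + n)"] by simp
    then show "fst (snd (yrun q u \<omega> k)) = T" by (simp add: sig_def Pc_n)
  qed
  then show "\<omega> \<in> outputs q u T" unfolding outputs_def by auto
qed

lemma final: "measure coin_space (outputs q u T) = prodinf gg * W n"
proof -
  interpret PC: prob_space coin_space by (rule prob_coin)
  have "(\<lambda>M. measure coin_space (EM (Suc M))) \<longlonglongrightarrow> measure coin_space (\<Union>M. EM (Suc M))"
  proof (rule PC.finite_Lim_measure_incseq)
    show "range (\<lambda>M. EM (Suc M)) \<subseteq> sets coin_space" using EM_sets by auto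
    show "incseq (\<lambda>M. EM (Suc M))"
    proof (rule incseq_SucI)
      fix M show "EM (Suc M) \<subseteq> EM (Suc (Suc M))"
      proof
        fix \<omega> assume "\<omega> \<in> EM (Suc M)"
        then have "\<forall>j. yrun q u \<omega> (M + n + j) = sig (Suc M + j) n" unfolding EM_def by simp
        then have "yrun q u \<omega> (M + n + Suc j) = sig (Suc M + Suc j) n" for j by blast
        then show "\<omega> \<in> EM (Suc (Suc M))" unfolding EM_def by simp
      qed
    qed
  qed
  moreover have "(\<lambda>M. measure coin_space (EM (Suc M))) \<longlonglongrightarrow> W n * 1 * prodinf gg"
  proof -
    have "(\<lambda>M. h n (Suc M)) \<longlonglongrightarrow> 1" using h_lim[of n] by (rule LIMSEQ_Suc)
    then have "(\<lambda>M. W n * h n (Suc M) * prodinf gg) \<longlonglongrightarrow> W n * 1 * prodinf gg"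
      by (intro tendsto_mult tendsto_const)
    then show ?thesis using P_EM by simp
  qed
  ultimately show ?thesis unfolding outputs_eq using LIMSEQ_unique by (simp add: mult.commute)
qed

end

theorem corollary4:
  fixes q u :: real and T :: tab and n :: nat
  assumes "q > 1" and "0 < u" and "u < 1" and "syt T n"
  shows "measure coin_space (outputs q u T) =
           prodinf (\<lambda>r. 1 - u / q ^ Suc r) *
           (\<Prod>i<n. edge_wt q u (shape T i) (shape T (Suc i)))"
proof -
  interpret ysetup q u T n using assms by unfold_locales
  have "measure coin_space (outputs q u T) = prodinf gg * W n" by (rule final)
  then show ?thesis unfolding gg_def W_def gam_def by simp
qed

end
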